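(* Let $\chi \in \mathbb{F}_{p^2}^\times$ such that $|\chi| \not\in \{1, 2\}$ and $|\chi| \in \mathcal{D}(p \pm 1)$. Then exactly one of $\iota_{p \pm 1}(\chi)$ or $\iota_{p \pm 1}(\chi^{-1})$ is in the lower half.
   Context: Let $p$ be an odd prime; $|\cdot|$ denotes multiplicative order in $\mathbb{F}_{p^2}^\times$, $\mathcal{D}(n)$ is the set of positive divisors of $n$, and $\mathcal{D}(p \pm 1) = \mathcal{D}(p-1) \cup \mathcal{D}(p+1)$. Write $p - 1 = p_1^{t_1} \cdots p_n^{t_n}$ with $p_1 = 2$. Fix a $\mathbb{Z}$-basis $\{g_i\}_{i=1}^n$ of $\mathbb{F}_p^\times$ with $|g_i| = p_i^{t_i}$; this gives a group isomorphism $\iota_{p-1} : \mathbb{F}_p^\times \to \bigoplus_{i=1}^n \mathbb{Z}/p_i^{t_i}\mathbb{Z}$, $\prod_{i} g_i^{r_i} \mapsto (r_1, \ldots, r_n)$. The identical construction, with $p+1 = q_1^{s_1}\cdots q_m^{s_m}$ ($q_1 = 2$) and the subgroup $E \subset \mathbb{F}_{p^2}^\times$ of order $p+1$ in place of $\mathbb{F}_p^\times$, gives $\iota_{p+1} : E \to \bigoplus_i \mathbb{Z}/q_i^{s_i}\mathbb{Z}$; $\iota_{p\pm1}$ means $\iota_{p-1}$ when $\chi \in \mathbb{F}_p^\times$ and $\iota_{p+1}$ when $\chi \in E$. Definition (lower half): with $p \pm 1 = p_1^{t_1}\cdots p_n^{t_n}$, $p_1 = 2$, let $(r_1, \ldots,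 r_n) \in \bigoplus_{i} \mathbb{Z}/p_i^{t_i}\mathbb{Z}$ be an integer array (via the isomorphism above) not representing an element of order $1$ or $2$, and let $k = \min\{j : r_j \neq 0 \text{ and } (p_j, r_j) \neq (2, 2^{t_1 - 1})\}$. The array is in the lower half if $r_k \leq p_k^{t_k}/2$. *)

theory Defs
  imports "HOL-Algebra.Algebra"
begin

(* F_p^x inside a field R of order p^2: the nonzero elements fixed by Frobenius *)
definition Fp_units :: "('a, 'b) ring_scheme \<Rightarrow> nat \<Rightarrow> 'a set" where
  "Fp_units R p = {x \<in> carrier R - {\<zero>\<^bsub>R\<^esub>}. x [^]\<^bsub>R\<^esub> p = x}"

(* E: the (unique) subgroup of order p+1 of the cyclic group F_{p^2}^x *)
definition E_units :: "('a, 'b) ring_scheme \<Rightarrow> nat \<Rightarrow> 'a set" where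
  "E_units R p = {x \<in> carrier R - {\<zero>\<^bsub>R\<^esub>}. x [^]\<^bsub>R\<^esub> (p + 1) = \<one>\<^bsub>R\<^esub>}"

definition arrays :: "nat \<Rightarrow> (nat \<Rightarrow> nat) \<Rightarrow> (nat \<Rightarrow> nat) \<Rightarrow> (nat \<Rightarrow> nat) set" where
  "arrays n ps ts = {r. (\<forall>i<n. r i < ps i ^ ts i) \<and> (\<forall>i\<ge>n. r i = 0)}"

definition basis_prod :: "('a, 'c) monoid_scheme \<Rightarrow> nat \<Rightarrow> (nat \<Rightarrow> 'a) \<Rightarrow> (nat \<Rightarrow> nat) \<Rightarrow> 'a" where
  "basis_prod G n g r = finprod G (\<lambda>i. g i [^]\<^bsub>G\<^esub> r i) {..<n}"

definition iota :: "('a, 'c) monoid_scheme \<Rightarrow> nat \<Rightarrow> (nat \<Rightarrow> nat) \<Rightarrow> (nat \<Rightarrow> nat)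
    \<Rightarrow> (nat \<Rightarrow> 'a) \<Rightarrow> 'a \<Rightarrow> (nat \<Rightarrow> nat)" where
  "iota G n ps ts g x = (THE r. r \<in> arrays n ps ts \<and> basis_prod G n g r = x)"

(* lower half; indices shifted to 0..n-1, ps 0 = 2; r_k <= p_k^{t_k}/2 written as 2 r_k <= p_k^{t_k} *)
definition lower_half :: "nat \<Rightarrow> (nat \<Rightarrow> nat) \<Rightarrow> (nat \<Rightarrow> nat) \<Rightarrow> (nat \<Rightarrow> nat) \<Rightarrow> bool" where
  "lower_half n ps ts r =
     (let k = (LEAST j. j < n \<and> r j \<noteq> 0 \<and> \<not> (ps j = 2 \<and> r j = 2 ^ (ts 0 - 1)))
      in 2 * r k \<le> ps k ^ ts k)"

end

theory Submission
  imports Defs "HOL-Computational_Algebra.Primes"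
begin

lemma (in comm_group) bp_mult_one:
  assumes g: "\<forall>i<n. g i \<in> carrier G"
    and h: "\<forall>i<n. g i [^] (a i::nat) \<otimes> g i [^] (b i::nat) = \<one>"
  shows "basis_prod G n g a \<otimes> basis_prod G n g b = \<one>"
proof -
  have "basis_prod G n g a \<otimes> basis_prod G n g b
      = finprod G (\<lambda>i. g i [^] a i \<otimes> g i [^] b i) {..<n}"
    unfolding basis_prod_def
    by (rule finprod_multf[symmetric]) (use g in auto)
  also have "\<dots> = \<one>" by (rule finprod_one_eqI) (use h in auto)
  finally show ?thesis .
qed

lemma (in comm_group) bp_closed:
  assumes g: "\<forall>i<n. g i \<in> carrier G"
  shows "basis_prod G n g a \<in> carrier G"
  unfolding basis_prod_def by (rule finprod_closed) (use g in auto)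

theorem lemma9:
  fixes R :: "('a, 'b) ring_scheme" and p N n :: nat and ps ts :: "nat \<Rightarrow> nat"
    and g :: "nat \<Rightarrow> 'a" and H :: "'a set" and \<chi> :: 'a
  assumes field: "field R"
    and fin: "finite (carrier R)"
    and card: "card (carrier R) = p ^ 2"
    and p: "Factorial_Ring.prime p" "odd p"
    and choice: "(N = p - 1 \<and> H = Fp_units R p) \<or> (N = p + 1 \<and> H = E_units R p)"
    and n: "n \<ge> 1"
    and ps0: "ps 0 = 2"
    and ps_prime: "\<forall>i<n. Factorial_Ring.prime (ps i)"
    and ps_inj: "inj_on ps {..<n}"
    and ts_pos: "\<forall>i<n. ts i \<ge> 1"
    and factor: "N = (\<Prod>i<n. ps i ^ ts i)"
    and g_in: "\<forall>i<n. g i \<in> H"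
    and g_ord: "\<forall>i<n. group.ord (mult_of R) (g i) = ps i ^ ts i"
    and basis: "bij_betw (basis_prod (mult_of R) n g) (arrays n ps ts) H"
    and chi: "\<chi> \<in> carrier R - {\<zero>\<^bsub>R\<^esub>}"
    and chi_ord: "group.ord (mult_of R) \<chi> \<notin> {1, 2}"
    and chi_dvd: "group.ord (mult_of R) \<chi> dvd p - 1 \<or> group.ord (mult_of R) \<chi> dvd p + 1"
    and chi_H: "\<chi> \<in> H"
  shows "lower_half n ps ts (iota (mult_of R) n ps ts g \<chi>) \<noteq>
         lower_half n ps ts (iota (mult_of R) n ps ts g (inv\<^bsub>mult_of R\<^esub> \<chi>))"
proof -
  define G where "G = mult_of R"
  interpret F: field R by (rule field)
  have meq: "Ring_Divisibility.mult_of R = Multiplicative_Group.mult_of R"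
    by (simp add: Ring_Divisibility.mult_of_def Multiplicative_Group.mult_of_def)
  have grp: "group G" unfolding G_def meq by (rule F.field_mult_group)
  interpret G: comm_group G
    by (rule group.group_comm_groupI[OF grp]) (auto simp: G_def F.m_comm)
  have carrG: "carrier G = carrier R - {\<zero>\<^bsub>R\<^esub>}" unfolding G_def by simp
  have Hsub: "H \<subseteq> carrier G"
    using choice by (auto simp: carrG Fp_units_def E_units_def)
  have gc: "\<forall>i<n. g i \<in> carrier G" using g_in Hsub by auto
  have chiG: "\<chi> \<in> carrier G" using chi carrG by simp
  define P where "P i = ps i ^ ts i" for i
  have Ppos: "P i > 0" if "i < n" for i
    using ps_prime that by (simp add: P_def prime_gt_0_nat)
  have gP: "g i [^]\<^bsub>G\<^esub> P i = \<one>\<^bsub>G\<^esub>" if "i < n" for i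
    using G.pow_eq_id[of "g i" "P i"] gc g_ord that by (simp add: G_def P_def)
  have inj: "inj_on (basis_prod G n g) (arrays n ps ts)"
    and img: "basis_prod G n g ` arrays n ps ts = H"
    using basis by (auto simp: bij_betw_def G_def)
  have iota_eq: "iota G n ps ts g x = r" if "r \<in> arrays n ps ts" "basis_prod G n g r = x" for r x
    unfolding iota_def
    by (rule the1_equality) (use that inj in \<open>auto simp: inj_on_def\<close>)
  obtain r where r: "r \<in> arrays n ps ts" "basis_prod G n g r = \<chi>"
    using chi_H img by auto
  have ir: "iota G n ps ts g \<chi> = r" using iota_eq r by simp
  have rlt: "r i < P i" if "i < n" for i using r(1) that by (simp add: arrays_def P_def)
  define r' where "r' i = (if i < n then (P i - r i) mod P i else 0)" for i
  have r'a: "r' \<in> arrays n ps ts"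
    using Ppos by (auto simp: arrays_def r'_def P_def)
  have "basis_prod G n g r' \<otimes>\<^bsub>G\<^esub> basis_prod G n g r = \<one>\<^bsub>G\<^esub>"
  proof (rule G.bp_mult_one[OF gc], intro allI impI)
    fix i assume i: "i < n"
    have "g i [^]\<^bsub>G\<^esub> r' i \<otimes>\<^bsub>G\<^esub> g i [^]\<^bsub>G\<^esub> r i = g i [^]\<^bsub>G\<^esub> (r' i + r i)"
      using gc i by (simp add: G.nat_pow_mult)
    also have "\<dots> = \<one>\<^bsub>G\<^esub>"
    proof (cases "r i = 0")
      case True then show ?thesis using i by (simp add: r'_def)
    next
      case False
      then have "r' i + r i = P i" using rlt[OF i] i by (simp add: r'_def)
      then show ?thesis using gP i by simp
    qed
    finally show "g i [^]\<^bsub>G\<^esub> r' i \<otimes>\<^bsub>G\<^esub> g i [^]\<^bsub>G\<^esub> r i = \<one>\<^bsub>G\<^esub>" .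
  qed
  then have "inv\<^bsub>G\<^esub> \<chi> = basis_prod G n g r'"
    using G.comm_inv_char[OF chiG G.bp_closed[OF gc]] r(2) G.m_comm[OF chiG G.bp_closed[OF gc]]
    by simp
  then have ir': "iota G n ps ts g (inv\<^bsub>G\<^esub> \<chi>) = r'" using iota_eq r'a by simp
  have n0: "0 < n" using n by simp
  have ps2: "ps j = 2 \<longleftrightarrow> j = 0" if "j < n" for j
    using ps_inj that n0 ps0 by (auto simp: inj_on_def)
  have P0: "P 0 = 2 * 2 ^ (ts 0 - 1)"
  proof -
    obtain m where m: "ts 0 = Suc m" using ts_pos n0 by (metis Suc_le_D One_nat_def)
    show ?thesis by (simp add: P_def m ps0)
  qed
  define S where "S r = {j. j < n \<and> r j \<noteq> 0 \<and> \<not> (ps j = 2 \<and> r j = 2 ^ (ts 0 - 1))}" for r :: "nat \<Rightarrow> nat"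
  have SS: "S r' = S r"
  proof -
    have "(r' j \<noteq> 0 \<and> \<not> (ps j = 2 \<and> r' j = 2 ^ (ts 0 - 1))) =
          (r j \<noteq> 0 \<and> \<not> (ps j = 2 \<and> r j = 2 ^ (ts 0 - 1)))" if j: "j < n" for j
    proof (cases "r j = 0")
      case True then show ?thesis using j by (simp add: r'_def)
    next
      case False
      then have e: "r' j = P j - r j" using rlt[OF j] j by (simp add: r'_def)
      show ?thesis
      proof (cases "j = 0")
        case True
        then show ?thesis using e False rlt[OF j] P0 ps0 by auto
      next
        case False2: False
        then show ?thesis using e False rlt[OF j] ps2[OF j] by auto
      qed
    qed
    then show ?thesis unfolding S_def by auto
  qed
  have Sne: "S r \<noteq> {}"
  proof
    assume emp: "S r = {}"
    have "\<chi> \<otimes>\<^bsub>G\<^esub> \<chi> = \<one>\<^bsub>G\<^esub>"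
      unfolding r(2)[symmetric]
    proof (rule G.bp_mult_one[OF gc], intro allI impI)
      fix i assume i: "i < n"
      have "g i [^]\<^bsub>G\<^esub> r i \<otimes>\<^bsub>G\<^esub> g i [^]\<^bsub>G\<^esub> r i = g i [^]\<^bsub>G\<^esub> (r i + r i)"
        using gc i by (simp add: G.nat_pow_mult)
      also have "\<dots> = \<one>\<^bsub>G\<^esub>"
      proof (cases "r i = 0")
        case True then show ?thesis by simp
      next
        case False
        then have "ps i = 2 \<and> r i = 2 ^ (ts 0 - 1)" using emp i unfolding S_def by blast
        then have "i = 0" "r i + r i = P 0" using ps2[OF i] P0 by auto
        then show ?thesis using gP n0 by simp
      qed
      finally show "g i [^]\<^bsub>G\<^esub> r i \<otimes>\<^bsub>G\<^esub> g i [^]\<^bsub>G\<^esub> r i = \<one>\<^bsub>G\<^esub>" .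
    qed
    then have "\<chi> [^]\<^bsub>G\<^esub> (2::nat) = \<one>\<^bsub>G\<^esub>"
      using chiG by (simp add: numeral_2_eq_2 G.nat_pow_Suc2 G.nat_pow_0)
    then have "G.ord \<chi> dvd 2" using G.pow_eq_id[OF chiG] by simp
    then have "G.ord \<chi> \<in> {1, 2}"
      using dvd_imp_le[of "G.ord \<chi>" 2] by (cases "G.ord \<chi>"; auto; presburger)
    then show False using chi_ord by (simp add: G_def)
  qed
  define k where "k = (LEAST j. j \<in> S r)"
  have kS: "k \<in> S r" unfolding k_def using Sne by (metis LeastI ex_in_conv)
  have lh: "lower_half n ps ts q = (2 * q k \<le> P k)" if "S q = S r" for q
  proof -
    have "(LEAST j. j < n \<and> q j \<noteq> 0 \<and> \<not> (ps j = 2 \<and> q j = 2 ^ (ts 0 - 1))) = k"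
    proof -
      have "(LEAST j. j < n \<and> q j \<noteq> 0 \<and> \<not> (ps j = 2 \<and> q j = 2 ^ (ts 0 - 1))) = (LEAST j. j \<in> S q)"
        by (simp only: S_def mem_Collect_eq)
      then show ?thesis unfolding k_def that .
    qed
    then show ?thesis unfolding lower_half_def P_def by simp
  qed
  have kn: "k < n" "r k \<noteq> 0" "\<not> (ps k = 2 \<and> r k = 2 ^ (ts 0 - 1))" using kS by (auto simp: S_def)
  have e: "r' k = P k - r k" using rlt[OF kn(1)] kn by (simp add: r'_def)
  have "2 * r k \<noteq> P k"
  proof (cases "k = 0")
    case True then show ?thesis using kn P0 ps0 by auto
  next
    case False
    then have "ps k \<noteq> 2" using ps2[OF kn(1)] by simp
    then have "odd (ps k)" using ps_prime kn(1) by (metis prime_odd_nat prime_ge_2_nat le_neq_implies_less)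
    then have "odd (P k)" by (simp add: P_def)
    then show ?thesis by (metis dvd_triv_left)
  qed
  then have "(2 * r k \<le> P k) \<noteq> (2 * r' k \<le> P k)" using e rlt[OF kn(1)] by auto
  then show ?thesis using lh[of r] lh[OF SS] ir ir' by (simp add: G_def)
qed

end
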